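(* The measure space $(\mathbb{R}^{\mathbb{N}},\mu)$ is not localizable.
   Context: Let $\mathcal{B}$ be the Borel $\sigma$-algebra of $\mathbb{R}$, $\lambda$ the Lebesgue measure, and $\mathcal{B}_{\infty}$ the $\sigma$-algebra on $\mathbb{R}^{\mathbb{N}}$ generated by the cylinder sets $\prod_{i=1}^{m}C_{i}\times\prod_{i=m+1}^{\infty}\mathbb{R}$ with $C_i\in\mathcal{B}$, $m\in\mathbb{N}$. Let $\mathcal{F}(\mathcal{B},\lambda)$ be the set of finite rectangles $\prod_{i\in\mathbb{N}}C_{i}$ with $C_i\in\mathcal{B}$ and $\prod_{i}\lambda(C_i)\in[0,\infty)$, with $\mathrm{vol}(\prod_{i}C_i):=\prod_i\lambda(C_i)$. The measure $\mu$ is the restriction to $\mathcal{B}_{\infty}$ of the outer measure $\mu^{\ast}(A):=\inf\{\sum_{n}\mathrm{vol}(\mathscr{C}_{n}) : \mathscr{C}_{n}\in\mathcal{F}(\mathcal{B},\lambda),\ A\subset\bigcup_{n}\mathscr{C}_{n}\}$ ($\inf\varnothing=\infty$). A measure space $(X,\Sigma,\nu)$ is localizable if $\nu$ is semi-finite and every $\mathcal{E}\subset\Sigma$ admits an essential supremum, i.e., some $H_{\mathcal{E}}\in\Sigma$ with $\nu(E\setminus H_{\mathcal{E}})=0$ for all $E\in\mathcal{E}$, and such that whenever $G\in\Sigma$ satisfies $\nu(E\setminus G)=0$ for all $E\in\mathcal{E}$, then $\nu(H_{\mathcal{E}}\setminus G)=0$. *)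

theory Defs
  imports "HOL-Analysis.Analysis"
begin

definition cylinders :: "(nat \<Rightarrow> real) set set" where
  "cylinders = {{x. \<forall>i<m. x i \<in> C i} | C m. \<forall>i. C i \<in> sets borel}"

definition B_inf :: "(nat \<Rightarrow> real) set set" where
  "B_inf = sigma_sets UNIV cylinders"

text \<open>Infinite product of the Lebesgue measures of the factors, as the limit of the
  partial products in [0,infinity] (ennreal, with 0 * infinity = 0).\<close>

definition has_vol :: "(nat \<Rightarrow> real set) \<Rightarrow> ennreal \<Rightarrow> bool" where
  "has_vol C v \<longleftrightarrow> (\<lambda>n. \<Prod>i<n. emeasure lborel (C i)) \<longlonglongrightarrow> v"

definition finite_rectangle :: "(nat \<Rightarrow> real set) \<Rightarrow> bool" where
  "finite_rectangle C \<longleftrightarrow> (\<forall>i. C i \<in> sets borel) \<and> (\<exists>v. has_vol C v \<and> v < \<infinity>)"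

definition vol :: "(nat \<Rightarrow> real set) \<Rightarrow> ennreal" where
  "vol C = lim (\<lambda>n. \<Prod>i<n. emeasure lborel (C i))"

definition mu_star :: "(nat \<Rightarrow> real) set \<Rightarrow> ennreal" where
  "mu_star A = (INF R \<in> {R :: nat \<Rightarrow> nat \<Rightarrow> real set.
        (\<forall>n. finite_rectangle (R n)) \<and> A \<subseteq> (\<Union>n. Pi UNIV (R n))}.
        \<Sum>n. vol (R n))"

definition mu :: "(nat \<Rightarrow> real) set \<Rightarrow> ennreal" where
  "mu A = (if A \<in> B_inf then mu_star A else 0)"

text \<open>Localizability of an abstract measure space (Sigma, nu) (the underlying set X
  is implicit as the top element of Sigma).\<close>

definition semi_finite :: "'a set set \<Rightarrow> ('a set \<Rightarrow> ennreal) \<Rightarrow> bool" where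
  "semi_finite \<Sigma> \<nu> \<longleftrightarrow>
     (\<forall>E\<in>\<Sigma>. \<nu> E = \<infinity> \<longrightarrow> (\<exists>F\<in>\<Sigma>. F \<subseteq> E \<and> 0 < \<nu> F \<and> \<nu> F < \<infinity>))"

definition is_ess_sup :: "'a set set \<Rightarrow> ('a set \<Rightarrow> ennreal) \<Rightarrow> 'a set set \<Rightarrow> 'a set \<Rightarrow> bool" where
  "is_ess_sup \<Sigma> \<nu> \<E> H \<longleftrightarrow> H \<in> \<Sigma> \<and> (\<forall>E\<in>\<E>. \<nu> (E - H) = 0) \<and>
     (\<forall>G\<in>\<Sigma>. (\<forall>E\<in>\<E>. \<nu> (E - G) = 0) \<longrightarrow> \<nu> (H - G) = 0)"

definition localizable :: "'a set set \<Rightarrow> ('a set \<Rightarrow> ennreal) \<Rightarrow> bool" where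
  "localizable \<Sigma> \<nu> \<longleftrightarrow> semi_finite \<Sigma> \<nu> \<and> (\<forall>\<E>. \<E> \<subseteq> \<Sigma> \<longrightarrow> (\<exists>H. is_ess_sup \<Sigma> \<nu> \<E> H))"

end

theory Submission
  imports Defs
begin



lemma real_part:
  fixes ar br :: "nat \<Rightarrow> real"
  assumes pos: "\<And>i. 0 < ar i" and b: "\<And>i. 0 \<le> br i \<and> br i \<le> ar i"
    and ev: "\<And>i. even i \<Longrightarrow> br i \<le> 1/2"
    and lim: "(\<lambda>n. \<Prod>i<n. ar i) \<longlonglongrightarrow> r"
  shows "(\<lambda>n. \<Prod>i<n. br i) \<longlonglongrightarrow> 0"
proof -
  define p where "p n = (\<Prod>i<n. ar i)" for n
  have ppos: "p n > 0" for n unfolding p_def using pos by (simp add: prod_pos)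
  have r0: "r \<ge> 0" using lim ppos unfolding p_def[symmetric]
    by (meson LIMSEQ_le_const less_imp_le)
  show ?thesis
  proof (cases "r = 0")
    case True
    show ?thesis
    proof (rule tendsto_sandwich[of "\<lambda>_. 0" _ _ "p"])
      show "\<forall>\<^sub>F n in sequentially. 0 \<le> (\<Prod>i<n. br i)" using b by (simp add: prod_nonneg)
      show "\<forall>\<^sub>F n in sequentially. (\<Prod>i<n. br i) \<le> p n" unfolding p_def
        using b by (simp add: prod_mono)
      show "p \<longlonglongrightarrow> 0" using lim True unfolding p_def[symmetric] by simp
    qed simp
  next
    case False
    hence rpos: "r > 0" using r0 by simp
    have pl: "p \<longlonglongrightarrow> r" using lim unfolding p_def[symmetric] .
    have "(\<lambda>i. p (Suc i) / p i) \<longlonglongrightarrow> r / r"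
      by (intro tendsto_divide pl LIMSEQ_Suc) (use rpos in auto)
    moreover have "p (Suc i) / p i = ar i" for i using ppos[of i] pos unfolding p_def by (simp add: less_imp_neq[symmetric])
    ultimately have "ar \<longlonglongrightarrow> 1" using rpos by simp
    hence "\<forall>\<^sub>F i in sequentially. ar i > 3/4" by (rule order_tendstoD) simp
    then obtain N where N: "\<And>i. i \<ge> N \<Longrightarrow> ar i > 3/4" by (auto simp: eventually_sequentially)
    define s where "s n = (\<Prod>i<n. br i / ar i)" for n
    have rat: "0 \<le> br i / ar i \<and> br i / ar i \<le> 1" for i using b[of i] pos[of i] by auto
    have snn: "s n \<ge> 0" for n unfolding s_def using rat by (simp add: prod_nonneg)
    have sSuc: "s (Suc n) = s n * (br n / ar n)" for n unfolding s_def by simp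
    have "decseq s"
    proof (rule decseq_SucI)
      fix n show "s (Suc n) \<le> s n" unfolding sSuc using rat[of n] snn[of n]
        by (metis mult_left_le times_divide_eq_right)
    qed
    then obtain L where L: "s \<longlonglongrightarrow> L" using decseq_convergent[of s 0] snn by blast
    have L0: "L \<ge> 0" using L snn by (meson LIMSEQ_le_const)
    have l1: "(\<lambda>k. s (Suc (2*k))) \<longlonglongrightarrow> L"
      using LIMSEQ_subseq_LIMSEQ[OF L, of "\<lambda>k. Suc (2*k)"] by (simp add: strict_mono_def o_def)
    have l2: "(\<lambda>k. (2/3) * s (2*k)) \<longlonglongrightarrow> (2/3) * L"
      using LIMSEQ_subseq_LIMSEQ[OF L, of "\<lambda>k. 2*k"] by (intro tendsto_mult_left) (simp add: strict_mono_def o_def)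
    have "\<forall>k\<ge>N. s (Suc (2*k)) \<le> (2/3) * s (2*k)"
    proof (intro allI impI)
      fix k assume "k \<ge> N"
      hence a: "ar (2*k) > 3/4" using N by simp
      have "br (2*k) \<le> 1/2" using ev by simp
      hence "br (2*k) / ar (2*k) \<le> (1/2) / (3/4)"
        using a b[of "2*k"] by (intro frac_le) auto
      thus "s (Suc (2*k)) \<le> (2/3) * s (2*k)" unfolding sSuc using snn[of "2*k"]
        using mult_left_mono[of "br (2*k) / ar (2*k)" "2/3" "s (2*k)"] by (simp add: mult.commute)
    qed
    hence "L \<le> (2/3) * L" using LIMSEQ_le[OF l1 l2] by blast
    hence "L = 0" using L0 by simp
    have "(\<lambda>n. s n * p n) \<longlonglongrightarrow> 0 * r" by (intro tendsto_mult L[unfolded \<open>L = 0\<close>] pl)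
    moreover have "s n * p n = (\<Prod>i<n. br i)" for n
      unfolding s_def p_def prod.distrib[symmetric] using pos by (intro prod.cong) (auto simp: less_imp_neq[symmetric])
    ultimately show ?thesis by simp
  qed
qed


definition Dset :: "nat \<Rightarrow> real set" where
  "Dset i = (if even i then {0..1/2} else UNIV)"

lemma Dset_borel[simp]: "Dset i \<in> sets borel"
  by (simp add: Dset_def)

lemma dich:
  assumes "finite_rectangle C"
  shows "(\<exists>j. emeasure lborel (C j) = 0) \<or> (\<forall>i. 0 < emeasure lborel (C i) \<and> emeasure lborel (C i) < \<infinity>)"
proof (rule ccontr)
  assume a: "\<not> ?thesis"
  then obtain j where j: "emeasure lborel (C j) = \<infinity>" and nz: "\<And>i. emeasure lborel (C i) \<noteq> 0"
    by (auto simp: less_top[symmetric] zero_less_iff_neq_zero)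
  from assms obtain v where hv: "has_vol C v" and vl: "v < \<infinity>" unfolding finite_rectangle_def by blast
  have "\<forall>\<^sub>F n in sequentially. (\<Prod>i<n. emeasure lborel (C i)) = \<infinity>"
    unfolding eventually_sequentially
    by (rule exI[of _ "Suc j"]) (use j nz in \<open>auto simp: ennreal_prod_eq_top\<close>)
  hence "(\<lambda>n. \<Prod>i<n. emeasure lborel (C i)) \<longlonglongrightarrow> \<infinity>"
    by (rule tendsto_eventually[THEN tendsto_cong[THEN iffD1, rotated]]) (simp add: eventually_mono)
  with hv have "v = \<infinity>" unfolding has_vol_def using LIMSEQ_unique by blast
  with vl show False by simp
qed

lemma key:
  assumes fr: "finite_rectangle C"
  shows "has_vol (\<lambda>i. C i \<inter> Dset i) 0"
proof -
  have Cb: "C i \<in> sets borel" for i using fr unfolding finite_rectangle_def by blast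
  from fr obtain v where hv: "has_vol C v" and vl: "v < \<infinity>" unfolding finite_rectangle_def by blast
  from dich[OF fr] show ?thesis
  proof
    assume "\<exists>j. emeasure lborel (C j) = 0"
    then obtain j where j: "emeasure lborel (C j) = 0" by blast
    have "emeasure lborel (C j \<inter> Dset j) = 0"
      using j Cb[of j] by (metis emeasure_mono inf_le1 le_zero_eq sets_lborel)
    hence "\<forall>\<^sub>F n in sequentially. (\<Prod>i<n. emeasure lborel (C i \<inter> Dset i)) = 0"
      unfolding eventually_sequentially by (intro exI[of _ "Suc j"]) auto
    thus ?thesis unfolding has_vol_def
      by (rule tendsto_eventually[THEN tendsto_cong[THEN iffD1, rotated]]) (simp add: eventually_mono)
  next
    assume pf: "\<forall>i. 0 < emeasure lborel (C i) \<and> emeasure lborel (C i) < \<infinity>"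
    define ar where "ar i = measure lborel (C i)" for i
    define br where "br i = measure lborel (C i \<inter> Dset i)" for i
    have ea: "emeasure lborel (C i) = ennreal (ar i)" for i
      unfolding ar_def using pf by (simp add: emeasure_eq_ennreal_measure less_top)
    have fin2: "emeasure lborel (C i \<inter> Dset i) < \<infinity>" for i
      using pf Cb[of i] by (metis emeasure_mono inf_le1 order.strict_trans1 sets_lborel)
    have eb: "emeasure lborel (C i \<inter> Dset i) = ennreal (br i)" for i
      unfolding br_def using fin2 by (simp add: emeasure_eq_ennreal_measure less_top)
    have apos: "0 < ar i" for i using pf ea[of i] by (metis ennreal_less_zero_iff)
    have bb: "0 \<le> br i \<and> br i \<le> ar i" for i
      using ea[of i] eb[of i] Cb[of i] unfolding br_def
      by (metis emeasure_mono ennreal_le_iff inf_le1 measure_nonneg sets_lborel apos less_imp_le)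
    have bev: "br i \<le> 1/2" if "even i" for i
    proof -
      have "emeasure lborel (C i \<inter> Dset i) \<le> emeasure lborel {0..1/2::real}"
        using that by (intro emeasure_mono) (auto simp: Dset_def)
      hence "ennreal (br i) \<le> ennreal (1/2)" using eb[of i] by simp
      thus ?thesis by (subst (asm) ennreal_le_iff) auto
    qed
    obtain r where vr: "v = ennreal r" and r0: "r \<ge> 0" using vl
      by (metis ennreal_cases infinity_ennreal_def order_less_irrefl)
    have "(\<lambda>n. ennreal (\<Prod>i<n. ar i)) \<longlonglongrightarrow> ennreal r"
      using hv unfolding has_vol_def vr ea using apos
      by (subst (asm) prod_ennreal) (auto simp: less_imp_le)
    hence "(\<lambda>n. \<Prod>i<n. ar i) \<longlonglongrightarrow> r"
      using r0 apos by (subst (asm) tendsto_ennreal_iff) (auto intro!: always_eventually prod_nonneg less_imp_le prod_pos)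
    from real_part[OF apos bb bev this]
    have "(\<lambda>n. ennreal (\<Prod>i<n. br i)) \<longlonglongrightarrow> ennreal 0"
      using bb by (subst tendsto_ennreal_iff) (auto intro!: always_eventually prod_nonneg)
    thus ?thesis unfolding has_vol_def eb using bb
      by (subst prod_ennreal) auto
  qed
qed


lemma E_in: "Pi UNIV Dset \<in> B_inf"
proof -
  have eq: "Pi UNIV Dset = (\<Inter>m. {x. \<forall>i<m. x i \<in> Dset i})"
  proof safe
    fix x i assume "x \<in> (\<Inter>m. {x. \<forall>i<m. x i \<in> Dset i})"
    hence "x \<in> {x. \<forall>j<Suc i. x j \<in> Dset j}" by blast
    thus "x i \<in> Dset i" by simp
  qed auto
  have "{x. \<forall>i<m. x i \<in> Dset i} \<in> cylinders" for m
    unfolding cylinders_def by (intro CollectI exI[of _ Dset] exI[of _ m]) auto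
  hence "(\<Inter>m. {x. \<forall>i<m. x i \<in> Dset i}) \<in> sigma_sets UNIV cylinders"
    by (intro sigma_sets_Inter[of cylinders UNIV] sigma_sets.Basic) auto
  thus ?thesis unfolding B_inf_def eq .
qed

lemma no_cover:
  fixes R :: "nat \<Rightarrow> nat \<Rightarrow> real set"
  assumes fr: "\<And>n. finite_rectangle (R n)"
  shows "\<not> Pi UNIV Dset \<subseteq> (\<Union>n. Pi UNIV (R n))"
proof
  assume cov: "Pi UNIV Dset \<subseteq> (\<Union>n. Pi UNIV (R n))"
  have Rb: "R n i \<in> sets borel" for n i using fr[of n] unfolding finite_rectangle_def by blast
  define nul where "nul n \<longleftrightarrow> (\<exists>j. emeasure lborel (R n j) = 0)" for n
  define j where "j n = (if nul n then (SOME j. emeasure lborel (R n j) = 0) else Suc (2*n))" for n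
  have j1: "nul n \<Longrightarrow> emeasure lborel (R n (j n)) = 0" for n
    unfolding j_def nul_def by (auto intro: someI_ex)
  have j2: "\<not> nul n \<Longrightarrow> j n = Suc (2*n) \<and> emeasure lborel (R n (j n)) < \<infinity>" for n
    using dich[OF fr[of n]] unfolding j_def nul_def by auto
  define B where "B i = (\<Union>n. if j n = i then R n i else {})" for i
  define N where "N i = (\<Union>n. if emeasure lborel (R n i) = 0 then R n i else {})" for i
  define X where "X i = (if odd i \<and> \<not> nul ((i - 1) div 2) then R ((i - 1) div 2) i else {})" for i
  have BNX: "B i \<subseteq> N i \<union> X i" for i
  proof
    fix y assume "y \<in> B i"
    then obtain n where "j n = i" "y \<in> R n i" unfolding B_def by (auto split: if_splits)
    show "y \<in> N i \<union> X i"
    proof (cases "nul n")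
      case True thus ?thesis using j1[of n] \<open>j n = i\<close> \<open>y \<in> R n i\<close> unfolding N_def by auto
    next
      case False
      hence "i = Suc (2*n)" using j2[of n] \<open>j n = i\<close> by simp
      thus ?thesis using False \<open>y \<in> R n i\<close> unfolding X_def by auto
    qed
  qed
  have Nnull: "emeasure lborel (N i) = 0" for i
    unfolding N_def by (rule emeasure_UN_eq_0) (auto simp: Rb)
  have Xfin: "emeasure lborel (X i) < \<infinity>" for i
  proof (cases "odd i \<and> \<not> nul ((i - 1) div 2)")
    case True
    hence "Suc (2*((i - 1) div 2)) = i" by (auto elim!: oddE)
    thus ?thesis using True j2[of "(i - 1) div 2"] unfolding X_def by metis
  qed (auto simp add: X_def)
  have Xe: "even i \<Longrightarrow> X i = {}" for i unfolding X_def by simp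
  have NXb: "N i \<union> X i \<in> sets lborel" for i unfolding N_def X_def using Rb by auto
  have small: "emeasure lborel (N i \<union> X i) < emeasure lborel (Dset i)" for i
  proof -
    have "emeasure lborel (N i \<union> X i) \<le> emeasure lborel (N i) + emeasure lborel (X i)"
      by (rule emeasure_subadditive) (use NXb in \<open>auto simp: N_def X_def Rb\<close>)
    hence le: "emeasure lborel (N i \<union> X i) \<le> emeasure lborel (X i)" using Nnull by simp
    show ?thesis
    proof (cases "even i")
      case True thus ?thesis using le Xe[of i] by (simp add: Dset_def ennreal_inverse_positive)
    next
      case False thus ?thesis using le Xfin[of i] by (simp add: Dset_def order.strict_trans1)
    qed
  qed
  have ex: "\<exists>y. y \<in> Dset i \<and> y \<notin> B i" for i
  proof (rule ccontr)
    assume "\<not> ?thesis"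
    hence "Dset i \<subseteq> N i \<union> X i" using BNX by blast
    hence "emeasure lborel (Dset i) \<le> emeasure lborel (N i \<union> X i)"
      using NXb by (intro emeasure_mono) auto
    with small[of i] show False by simp
  qed
  define x where "x i = (SOME y. y \<in> Dset i \<and> y \<notin> B i)" for i
  have x: "x i \<in> Dset i \<and> x i \<notin> B i" for i unfolding x_def using someI_ex[OF ex] by blast
  hence "x \<in> Pi UNIV Dset" by auto
  with cov obtain n where "x \<in> Pi UNIV (R n)" by blast
  hence "x (j n) \<in> B (j n)" unfolding B_def by auto
  with x show False by blast
qed

lemma mu_E: "mu (Pi UNIV Dset) = \<infinity>"
proof -
  have "{R :: nat \<Rightarrow> nat \<Rightarrow> real set. (\<forall>n. finite_rectangle (R n)) \<and> Pi UNIV Dset \<subseteq> (\<Union>n. Pi UNIV (R n))} = {}"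
    (is "?S = {}")
  proof (rule equals0I)
    fix R assume "R \<in> ?S"
    hence "\<forall>n. finite_rectangle (R n)" "Pi UNIV Dset \<subseteq> (\<Union>n. Pi UNIV (R n))" by simp_all
    thus False using no_cover[of R] by simp
  qed
  have "mu_star (Pi UNIV Dset) = (INF R\<in>?S. \<Sum>n. vol (R n))" unfolding mu_star_def ..
  also have "\<dots> = \<infinity>" unfolding \<open>?S = {}\<close> by simp
  finally show ?thesis unfolding mu_def using E_in by simp
qed

lemma small_sub:
  assumes "F \<subseteq> Pi UNIV Dset" "mu_star F < \<infinity>"
  shows "mu_star F = 0"
proof -
  let ?S = "{R :: nat \<Rightarrow> nat \<Rightarrow> real set. (\<forall>n. finite_rectangle (R n)) \<and> F \<subseteq> (\<Union>n. Pi UNIV (R n))}"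
  have "?S \<noteq> {}"
  proof
    assume e: "?S = {}"
    have "mu_star F = (INF R\<in>?S. \<Sum>n. vol (R n))" unfolding mu_star_def ..
    also have "\<dots> = \<infinity>" unfolding e by simp
    finally show False using assms(2) by simp
  qed
  then obtain R where "R \<in> ?S" by (meson ex_in_conv)
  hence fr: "\<And>n. finite_rectangle (R n)" and cov: "F \<subseteq> (\<Union>n. Pi UNIV (R n))" by simp_all
  define R' where "R' n i = R n i \<inter> Dset i" for n i
  have hv: "has_vol (R' n) 0" for n unfolding R'_def by (rule key[OF fr])
  have fr': "finite_rectangle (R' n)" for n
  proof -
    have "\<forall>i. R' n i \<in> sets borel" using fr[of n] unfolding finite_rectangle_def R'_def by (auto intro: sets.Int)
    thus ?thesis using hv[of n] unfolding finite_rectangle_def by (intro conjI exI[of _ 0]) simp_all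
  qed
  have v0: "vol (R' n) = 0" for n using hv[of n] unfolding vol_def has_vol_def by (rule limI)
  have "F \<subseteq> (\<Union>n. Pi UNIV (R' n))"
  proof
    fix x assume x: "x \<in> F"
    then obtain n where "x \<in> Pi UNIV (R n)" using cov by blast
    moreover have "x \<in> Pi UNIV Dset" using x assms(1) by blast
    ultimately have "x \<in> Pi UNIV (R' n)" unfolding R'_def by (simp add: Pi_iff)
    thus "x \<in> (\<Union>n. Pi UNIV (R' n))" by blast
  qed
  hence "R' \<in> ?S" using fr' by simp
  hence "mu_star F \<le> (\<Sum>n. vol (R' n))" unfolding mu_star_def by (rule INF_lower)
  thus ?thesis using v0 by simp
qed

theorem theoremA1:
  shows "\<not> localizable B_inf mu"
proof
  assume "localizable B_inf mu"
  hence sf: "semi_finite B_inf mu" unfolding localizable_def by blast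
  have "\<exists>F\<in>B_inf. F \<subseteq> Pi UNIV Dset \<and> 0 < mu F \<and> mu F < \<infinity>"
    using sf E_in mu_E unfolding semi_finite_def by simp
  then obtain F where F: "F \<in> B_inf" "F \<subseteq> Pi UNIV Dset" "0 < mu F" "mu F < \<infinity>"
    by blast
  hence "mu_star F < \<infinity>" "mu F = mu_star F" unfolding mu_def by auto
  with small_sub[OF F(2)] F(3) show False by simp
qed

end
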